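(* Let $M_{3/4}$ be the additive submonoid of $\mathbb{Q}$ generated by $\{(3/4)^n : n \in \mathbb{N}_0\}$. Let $f$ be a nonzero element of $\mathbb{Q}[M_{3/4}]$ such that some exponent $s$ in the support of $f$ satisfies the ACCP in $M_{3/4}$ (every ascending chain of principal ideals of $M_{3/4}$ starting at $s + M_{3/4}$ stabilizes). Then $f$ satisfies the ACCP in $\mathbb{Q}[M_{3/4}]$, i.e., every ascending chain of principal ideals of $\mathbb{Q}[M_{3/4}]$ starting at $f\,\mathbb{Q}[M_{3/4}]$ stabilizes.
   Context: $\mathbb{Q}[M_{3/4}]$ is the integral domain of polynomial expressions $\sum_{i} c_i x^{m_i}$ with nonzero $c_i \in \mathbb{Q}$ and distinct $m_i \in M_{3/4}$; the support of such an expression is the set of the $m_i$. *)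

theory Defs
  imports Complex_Main "HOL-Library.Poly_Mapping"
begin

inductive_set M34 :: "rat set" where
  zero: "0 \<in> M34"
| gen: "(3/4) ^ n \<in> M34"
| add: "a \<in> M34 \<Longrightarrow> b \<in> M34 \<Longrightarrow> a + b \<in> M34"

definition pidealM :: "rat \<Rightarrow> rat set" where
  "pidealM s = (\<lambda>c. s + c) ` M34"

text \<open>The monoid algebra Q[M34]: finitely supported functions rat =>0 rat with support in M34,
  multiplication is the convolution product of Poly_Mapping.\<close>
definition QM :: "(rat \<Rightarrow>\<^sub>0 rat) set" where
  "QM = {p. Poly_Mapping.keys p \<subseteq> M34}"

definition pidealR :: "(rat \<Rightarrow>\<^sub>0 rat) \<Rightarrow> (rat \<Rightarrow>\<^sub>0 rat) set" where
  "pidealR f = (\<lambda>q. f * q) ` QM"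

definition ACCP_M :: "rat \<Rightarrow> bool" where
  "ACCP_M s \<longleftrightarrow> (\<forall>a :: nat \<Rightarrow> rat.
     a 0 = s \<and> (\<forall>n. a n \<in> M34 \<and> pidealM (a n) \<subseteq> pidealM (a (Suc n)))
     \<longrightarrow> (\<exists>N. \<forall>n\<ge>N. pidealM (a n) = pidealM (a N)))"

definition ACCP_R :: "(rat \<Rightarrow>\<^sub>0 rat) \<Rightarrow> bool" where
  "ACCP_R f \<longleftrightarrow> (\<forall>g :: nat \<Rightarrow> (rat \<Rightarrow>\<^sub>0 rat).
     g 0 = f \<and> (\<forall>n. g n \<in> QM \<and> pidealR (g n) \<subseteq> pidealR (g (Suc n)))
     \<longrightarrow> (\<exists>N. \<forall>n\<ge>N. pidealR (g n) = pidealR (g N)))"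

end

theory Submission
  imports Defs
begin

lemma lookup_mult_rat:
  fixes p q :: "rat \<Rightarrow>\<^sub>0 rat"
  shows "Poly_Mapping.lookup (p * q) k = (\<Sum>l\<in>Poly_Mapping.keys p. Poly_Mapping.lookup p l * Poly_Mapping.lookup q (k - l))"
proof -
  have i: "(\<Sum>r. Poly_Mapping.lookup q r when k = l + r) = Poly_Mapping.lookup q (k - l)" for l :: rat
  proof -
    have e: "(\<lambda>r. Poly_Mapping.lookup q r when k = l + r) = (\<lambda>r. Poly_Mapping.lookup q r when r = k - l)"
      by (auto simp: fun_eq_iff when_def)
    show ?thesis unfolding e by (rule Sum_any_when_equal)
  qed
  have "Poly_Mapping.lookup (p * q) k = (\<Sum>l. Poly_Mapping.lookup p l * Poly_Mapping.lookup q (k - l))"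
    by (simp add: lookup_mult i)
  also have "\<dots> = (\<Sum>l\<in>Poly_Mapping.keys p. Poly_Mapping.lookup p l * Poly_Mapping.lookup q (k - l))"
    by (rule Sum_any.expand_superset) (auto simp: in_keys_iff)
  finally show ?thesis .
qed

lemma extremal_coeff:
  fixes p q :: "rat \<Rightarrow>\<^sub>0 rat"
  assumes u: "u \<in> Poly_Mapping.keys p" and v: "v \<in> Poly_Mapping.keys q"
    and uniq: "\<And>u' v'. u' \<in> Poly_Mapping.keys p \<Longrightarrow> v' \<in> Poly_Mapping.keys q \<Longrightarrow> u' + v' = u + v \<Longrightarrow> u' = u"
  shows "u + v \<in> Poly_Mapping.keys (p * q)"
proof -
  have "Poly_Mapping.lookup (p * q) (u + v) = (\<Sum>l\<in>Poly_Mapping.keys p. Poly_Mapping.lookup p l * Poly_Mapping.lookup q (u + v - l))"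
    by (rule lookup_mult_rat)
  also have "\<dots> = Poly_Mapping.lookup p u * Poly_Mapping.lookup q (u + v - u)"
  proof (rule sum.remove[of _ u, THEN trans])
    show "finite (Poly_Mapping.keys p)" by simp
    show "u \<in> Poly_Mapping.keys p" by fact
    have "(\<Sum>l\<in>Poly_Mapping.keys p - {u}. Poly_Mapping.lookup p l * Poly_Mapping.lookup q (u + v - l)) = 0"
    proof (rule sum.neutral, rule ballI)
      fix l assume l': "l \<in> Poly_Mapping.keys p - {u}"
      then have l: "l \<in> Poly_Mapping.keys p" "l \<noteq> u" by auto
      show "Poly_Mapping.lookup p l * Poly_Mapping.lookup q (u + v - l) = 0"
      proof (rule ccontr)
        assume "Poly_Mapping.lookup p l * Poly_Mapping.lookup q (u + v - l) \<noteq> 0"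
        then have "u + v - l \<in> Poly_Mapping.keys q" by (simp add: in_keys_iff)
        from uniq[OF l(1) this] l(2) show False by simp
      qed
    qed
    then show "Poly_Mapping.lookup p u * Poly_Mapping.lookup q (u + v - u) + (\<Sum>l\<in>Poly_Mapping.keys p - {u}. Poly_Mapping.lookup p l * Poly_Mapping.lookup q (u + v - l)) =
      Poly_Mapping.lookup p u * Poly_Mapping.lookup q (u + v - u)" by simp
  qed
  finally show ?thesis using u v by (simp add: in_keys_iff)
qed


lemma M34_nonneg: "x \<in> M34 \<Longrightarrow> 0 \<le> x"
  by (induction rule: M34.induct) auto

definition T3 :: "nat \<Rightarrow> rat set" where
  "T3 K = {q. \<exists>z::int. \<exists>j::nat. q * 4 ^ j = 3 ^ K * of_int z}"

lemma T3_zero: "0 \<in> T3 K"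
  unfolding T3_def by (rule CollectI, rule exI[of _ 0], auto)

lemma T3_add: assumes "a \<in> T3 K" "b \<in> T3 K" shows "a + b \<in> T3 K"
proof -
  obtain z1 j1 where 1: "a * 4 ^ j1 = 3 ^ K * of_int z1" using assms(1) by (auto simp: T3_def)
  obtain z2 j2 where 2: "b * 4 ^ j2 = 3 ^ K * of_int z2" using assms(2) by (auto simp: T3_def)
  have "(a + b) * 4 ^ (j1 + j2) = (a * 4 ^ j1) * 4 ^ j2 + (b * 4 ^ j2) * 4 ^ j1"
    by (simp add: algebra_simps power_add)
  also have "\<dots> = 3 ^ K * of_int (z1 * 4 ^ j2 + z2 * 4 ^ j1)"
    unfolding 1 2 by (simp add: algebra_simps)
  finally show ?thesis unfolding T3_def by blast
qed

lemma T3_uminus: assumes "a \<in> T3 K" shows "- a \<in> T3 K"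
proof -
  obtain z1 j1 where 1: "a * 4 ^ j1 = 3 ^ K * of_int z1" using assms(1) by (auto simp: T3_def)
  have "(- a) * 4 ^ j1 = 3 ^ K * of_int (- z1)" using 1 by simp
  then show ?thesis unfolding T3_def by blast
qed

lemma T3_diff: "a \<in> T3 K \<Longrightarrow> b \<in> T3 K \<Longrightarrow> a - b \<in> T3 K"
  using T3_add[of a K "- b"] T3_uminus[of b K] by simp

lemma T3_mono: assumes "K \<le> L" "a \<in> T3 L" shows "a \<in> T3 K"
proof -
  obtain z1 j1 where 1: "a * 4 ^ j1 = 3 ^ L * of_int z1" using assms(2) by (auto simp: T3_def)
  have "(3::rat) ^ L = 3 ^ K * 3 ^ (L - K)" using assms(1) by (simp flip: power_add)
  then have "a * 4 ^ j1 = 3 ^ K * of_int (3 ^ (L - K) * z1)" using 1 by simp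
  then show ?thesis unfolding T3_def by blast
qed

lemma M34_small: "x \<in> M34 \<Longrightarrow> 0 \<le> x \<and> (x < (3/4) ^ K \<longrightarrow> x \<in> T3 K)"
proof (induction rule: M34.induct)
  case zero
  then show ?case by (simp add: T3_zero)
next
  case (gen n)
  show ?case
  proof (intro conjI impI)
    show "0 \<le> (3/4::rat) ^ n" by simp
    assume "(3/4::rat) ^ n < (3/4) ^ K"
    then have "K \<le> n"
      using power_decreasing[of n K "3/4::rat"] by (cases "n \<le> K") auto
    have "(3/4::rat) ^ n * 4 ^ n = 3 ^ K * of_int (3 ^ (n - K))"
      using \<open>K \<le> n\<close> by (simp add: power_divide flip: power_add)
    then show "(3/4::rat) ^ n \<in> T3 K" unfolding T3_def by blast
  qed
next
  case (add a b)
  then show ?case using T3_add by fastforce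
qed

lemma M34_T30: "x \<in> M34 \<Longrightarrow> x \<in> T3 0"
proof (induction rule: M34.induct)
  case zero then show ?case by (simp add: T3_zero)
next
  case (gen n)
  have "(3/4::rat) ^ n * 4 ^ n = 3 ^ 0 * of_int (3 ^ n)" by (simp add: power_divide)
  then show ?case unfolding T3_def by blast
next
  case (add a b) then show ?case by (simp add: T3_add)
qed

lemma nat_less_3pow: "(n::nat) < 3 ^ n"
  by (induction n) auto

lemma T3_sep: assumes "e \<in> T3 0" "e \<noteq> 0" shows "\<exists>K0. \<forall>K\<ge>K0. e \<notin> T3 K"
proof -
  obtain z j where 1: "e * 4 ^ j = of_int z" using assms(1) by (auto simp: T3_def)
  have z0: "z \<noteq> 0" using 1 assms(2) by auto
  show ?thesis
  proof (intro exI allI impI)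
    fix K assume K: "nat \<bar>z\<bar> \<le> K"
    show "e \<notin> T3 K"
    proof
      assume "e \<in> T3 K"
      then obtain w i where 2: "e * 4 ^ i = 3 ^ K * of_int w" by (auto simp: T3_def)
      have "of_int (z * 4 ^ i) = (e * 4 ^ j) * (4::rat) ^ i" using 1 by simp
      also have "\<dots> = (e * 4 ^ i) * 4 ^ j" by (simp add: algebra_simps)
      also have "\<dots> = of_int (3 ^ K * (w * 4 ^ j))" using 2 by simp
      finally have "z * 4 ^ i = 3 ^ K * (w * 4 ^ j)" by (simp only: of_int_eq_iff)
      then have "(3::int) ^ K dvd z * 4 ^ i" by (metis dvd_triv_left)
      moreover have "coprime ((3::int) ^ K) (4 ^ i)"
      proof -
        have "coprime (3::int) 4" by (simp add: coprime_iff_gcd_eq_1 gcd_non_0_int)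
        then show ?thesis by (simp add: coprime_power_left_iff coprime_power_right_iff)
      qed
      ultimately have "(3::int) ^ K dvd z" using coprime_dvd_mult_left_iff by blast
      then have "(3::int) ^ K \<le> \<bar>z\<bar>" using z0 dvd_imp_le_int[of z "3 ^ K"] by simp
      moreover have "int K < 3 ^ K" using nat_less_3pow[of K] by (metis of_nat_less_iff of_nat_numeral of_nat_power)
      ultimately show False using K by linarith
    qed
  qed
qed

lemma T3_sep_finite:
  assumes "finite A" "A \<subseteq> T3 0"
  shows "\<exists>K. \<forall>e\<in>A. \<forall>e'\<in>A. e \<noteq> e' \<longrightarrow> e - e' \<notin> T3 K"
proof -
  have "eventually (\<lambda>K. \<forall>p\<in>A \<times> A. fst p \<noteq> snd p \<longrightarrow> fst p - snd p \<notin> T3 K) sequentially"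
  proof (rule eventually_ball_finite)
    show "finite (A \<times> A)" using assms by simp
    show "\<forall>p\<in>A \<times> A. eventually (\<lambda>K. fst p \<noteq> snd p \<longrightarrow> fst p - snd p \<notin> T3 K) sequentially"
    proof
      fix p assume p: "p \<in> A \<times> A"
      show "eventually (\<lambda>K. fst p \<noteq> snd p \<longrightarrow> fst p - snd p \<notin> T3 K) sequentially"
      proof (cases "fst p = snd p")
        case True then show ?thesis by simp
      next
        case False
        have "fst p - snd p \<in> T3 0" using p assms(2) T3_diff by (auto simp: mem_Times_iff subset_iff)
        then obtain K0 where "\<forall>K\<ge>K0. fst p - snd p \<notin> T3 K" using T3_sep False by fastforce
        then show ?thesis unfolding eventually_sequentially by blast
      qed
    qed
  qed
  then obtain K where "\<forall>p\<in>A \<times> A. fst p \<noteq> snd p \<longrightarrow> fst p - snd p \<notin> T3 K"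
    unfolding eventually_sequentially by blast
  then show ?thesis by force
qed


lemma keys_nonempty: "(p :: rat \<Rightarrow>\<^sub>0 rat) \<noteq> 0 \<Longrightarrow> Poly_Mapping.keys p \<noteq> {}"
  by simp

lemma deg_mult:
  fixes p q :: "rat \<Rightarrow>\<^sub>0 rat"
  assumes "p \<noteq> 0" "q \<noteq> 0"
  shows "Max (Poly_Mapping.keys (p * q)) = Max (Poly_Mapping.keys p) + Max (Poly_Mapping.keys q)"
proof (rule Max_eqI)
  show "finite (Poly_Mapping.keys (p * q))" by simp
  have fp: "finite (Poly_Mapping.keys p)" "Poly_Mapping.keys p \<noteq> {}" using assms by auto
  have fq: "finite (Poly_Mapping.keys q)" "Poly_Mapping.keys q \<noteq> {}" using assms by auto
  fix y assume "y \<in> Poly_Mapping.keys (p * q)"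
  then obtain a b where "y = a + b" "a \<in> Poly_Mapping.keys p" "b \<in> Poly_Mapping.keys q"
    using keys_mult by blast
  then show "y \<le> Max (Poly_Mapping.keys p) + Max (Poly_Mapping.keys q)"
    using fp fq by (simp add: add_mono)
next
  have fp: "finite (Poly_Mapping.keys p)" "Poly_Mapping.keys p \<noteq> {}" using assms by auto
  have fq: "finite (Poly_Mapping.keys q)" "Poly_Mapping.keys q \<noteq> {}" using assms by auto
  show "Max (Poly_Mapping.keys p) + Max (Poly_Mapping.keys q) \<in> Poly_Mapping.keys (p * q)"
  proof (rule extremal_coeff)
    show "Max (Poly_Mapping.keys p) \<in> Poly_Mapping.keys p" using fp by simp
    show "Max (Poly_Mapping.keys q) \<in> Poly_Mapping.keys q" using fq by simp
    fix u' v' assume "u' \<in> Poly_Mapping.keys p" "v' \<in> Poly_Mapping.keys q"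
      "u' + v' = Max (Poly_Mapping.keys p) + Max (Poly_Mapping.keys q)"
    moreover have "u' \<le> Max (Poly_Mapping.keys p)" "v' \<le> Max (Poly_Mapping.keys q)"
      using fp fq \<open>u' \<in> Poly_Mapping.keys p\<close> \<open>v' \<in> Poly_Mapping.keys q\<close> by auto
    ultimately show "u' = Max (Poly_Mapping.keys p)" by linarith
  qed
qed

lemma monomial_div:
  fixes f G h :: "rat \<Rightarrow>\<^sub>0 rat"
  assumes f: "f = G * h" "f \<noteq> 0" and hK: "Poly_Mapping.keys h \<subseteq> T3 K"
    and sep: "\<forall>e\<in>Poly_Mapping.keys f. \<forall>e'\<in>Poly_Mapping.keys f. e \<noteq> e' \<longrightarrow> e - e' \<notin> T3 K"
    and h0: "h \<noteq> 0"
  shows "\<exists>b. Poly_Mapping.keys h = {b}"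
proof (rule ccontr)
  assume nb: "\<nexists>b. Poly_Mapping.keys h = {b}"
  define H where "H = Poly_Mapping.keys h"
  have fH: "finite H" "H \<noteq> {}" using h0 by (auto simp: H_def)
  define a where "a = Min H"
  define b where "b = Max H"
  have aH: "a \<in> H" and bH: "b \<in> H" using fH by (auto simp: a_def b_def)
  have amin: "\<And>v. v \<in> H \<Longrightarrow> a \<le> v" and bmax: "\<And>v. v \<in> H \<Longrightarrow> v \<le> b"
    using fH by (auto simp: a_def b_def)
  have ab: "a < b"
  proof (rule ccontr)
    assume "\<not> a < b"
    then have "\<forall>v\<in>H. v = a" using amin bmax by (meson antisym_conv not_less order_trans)
    then have "H = {a}" using aH by blast
    then show False using nb by (simp add: H_def)
  qed
  have G0: "G \<noteq> 0" using f by auto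
  then obtain u0 where u0: "u0 \<in> Poly_Mapping.keys G" using keys_nonempty by blast
  define C where "C = {u \<in> Poly_Mapping.keys G. u - u0 \<in> T3 K}"
  have fC: "finite C" "C \<noteq> {}" using u0 T3_zero by (auto simp: C_def)
  define m where "m = Min C"
  define mx where "mx = Max C"
  have mC: "m \<in> C" and mxC: "mx \<in> C" using fC by (auto simp: m_def mx_def)
  have mmin: "\<And>v. v \<in> C \<Longrightarrow> m \<le> v" and mxmax: "\<And>v. v \<in> C \<Longrightarrow> v \<le> mx"
    using fC by (auto simp: m_def mx_def)
  have HT: "\<And>v. v \<in> H \<Longrightarrow> v \<in> T3 K" using hK by (auto simp: H_def)
  have inC: "u' \<in> C" if "u' \<in> Poly_Mapping.keys G" "v' \<in> H" "u' + v' = w + z" "w \<in> C" "z \<in> H" for u' v' w z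
  proof -
    have e: "u' - u0 = (w - u0) + (z - v')" using that(3) by (simp add: algebra_simps)
    have "w - u0 \<in> T3 K" using that(4) by (simp add: C_def)
    moreover have "z - v' \<in> T3 K" using HT that(2,5) T3_diff by blast
    ultimately have "(w - u0) + (z - v') \<in> T3 K" by (rule T3_add)
    then have "u' - u0 \<in> T3 K" unfolding e .
    then show ?thesis using that(1) by (simp add: C_def)
  qed
  have k1: "m + a \<in> Poly_Mapping.keys f"
    unfolding f(1)
  proof (rule extremal_coeff)
    show "m \<in> Poly_Mapping.keys G" using mC by (simp add: C_def)
    show "a \<in> Poly_Mapping.keys h" using aH by (simp add: H_def)
    fix u' v' assume uv: "u' \<in> Poly_Mapping.keys G" "v' \<in> Poly_Mapping.keys h" "u' + v' = m + a"
    then have "u' \<in> C" using inC[of u' v' m a] mC aH by (simp add: H_def)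
    then have "m \<le> u'" by (rule mmin)
    moreover have "a \<le> v'" using uv(2) amin by (simp add: H_def)
    ultimately show "u' = m" using uv(3) by linarith
  qed
  have k2: "mx + b \<in> Poly_Mapping.keys f"
    unfolding f(1)
  proof (rule extremal_coeff)
    show "mx \<in> Poly_Mapping.keys G" using mxC by (simp add: C_def)
    show "b \<in> Poly_Mapping.keys h" using bH by (simp add: H_def)
    fix u' v' assume uv: "u' \<in> Poly_Mapping.keys G" "v' \<in> Poly_Mapping.keys h" "u' + v' = mx + b"
    then have "u' \<in> C" using inC[of u' v' mx b] mxC bH by (simp add: H_def)
    then have "u' \<le> mx" by (rule mxmax)
    moreover have "v' \<le> b" using uv(2) bmax by (simp add: H_def)
    ultimately show "u' = mx" using uv(3) by linarith
  qed
  have ne: "mx + b \<noteq> m + a" using mmin[OF mxC] ab by linarith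
  have e: "(mx + b) - (m + a) = ((mx - u0) - (m - u0)) + (b - a)" by (simp add: algebra_simps)
  have "mx - u0 \<in> T3 K" "m - u0 \<in> T3 K" using mxC mC by (auto simp: C_def)
  then have "(mx - u0) - (m - u0) \<in> T3 K" by (rule T3_diff)
  moreover have "b - a \<in> T3 K" using HT aH bH T3_diff by blast
  ultimately have "((mx - u0) - (m - u0)) + (b - a) \<in> T3 K" by (rule T3_add)
  then have "(mx + b) - (m + a) \<in> T3 K" unfolding e .
  then show False using sep k1 k2 ne by blast
qed


lemma keys_zero_single:
  fixes p :: "rat \<Rightarrow>\<^sub>0 rat"
  assumes "Poly_Mapping.keys p = {0}"
  shows "p = Poly_Mapping.single 0 (Poly_Mapping.lookup p 0)"
proof (rule poly_mapping_eqI)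
  fix k show "Poly_Mapping.lookup p k = Poly_Mapping.lookup (Poly_Mapping.single 0 (Poly_Mapping.lookup p 0)) k"
  proof (cases "k = 0")
    case True then show ?thesis by simp
  next
    case False
    then have "k \<notin> Poly_Mapping.keys p" using assms by auto
    then show ?thesis using False by (simp add: in_keys_iff lookup_single_not_eq)
  qed
qed

lemma pidealM_eq: assumes "a \<in> M34" "b \<in> M34" "pidealM a = pidealM b" shows "a = b"
proof -
  have "a \<in> pidealM a" "b \<in> pidealM b" unfolding pidealM_def using M34.zero by force+
  then have "a \<in> pidealM b" "b \<in> pidealM a" using assms(3) by auto
  then have "a \<in> (\<lambda>c. b + c) ` M34" "b \<in> (\<lambda>c. a + c) ` M34" unfolding pidealM_def by auto
  then obtain c d where "c \<in> M34" "a = b + c" "d \<in> M34" "b = a + d" by blast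
  then show ?thesis using M34_nonneg[of c] M34_nonneg[of d] by linarith
qed

lemma one_QM: "1 \<in> QM"
proof -
  have "Poly_Mapping.keys (1 :: rat \<Rightarrow>\<^sub>0 rat) \<subseteq> {0}"
    by (auto simp: in_keys_iff lookup_one when_def split: if_splits)
  then show ?thesis unfolding QM_def using M34.zero by auto
qed

theorem proposition4p8:
  fixes f :: "rat \<Rightarrow>\<^sub>0 rat" and s :: rat
  assumes "f \<in> QM" and "f \<noteq> 0"
    and "s \<in> Poly_Mapping.keys f" and "ACCP_M s"
  shows "ACCP_R f"
  unfolding ACCP_R_def
proof (intro allI impI)
  note f0 = \<open>f \<noteq> 0\<close> and sk = \<open>s \<in> Poly_Mapping.keys f\<close> and acc = \<open>ACCP_M s\<close>
  fix g :: "nat \<Rightarrow> (rat \<Rightarrow>\<^sub>0 rat)"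
  assume "g 0 = f \<and> (\<forall>n. g n \<in> QM \<and> pidealR (g n) \<subseteq> pidealR (g (Suc n)))"
  then have g0: "g 0 = f" and gQ: "\<And>n. g n \<in> QM" and gsub: "\<And>n. pidealR (g n) \<subseteq> pidealR (g (Suc n))"
    by auto
  have "\<forall>n. \<exists>q. q \<in> QM \<and> g n = g (Suc n) * q"
  proof
    fix n
    have "g n \<in> pidealR (g n)" unfolding pidealR_def using one_QM by force
    then have "g n \<in> pidealR (g (Suc n))" using gsub by auto
    then show "\<exists>q. q \<in> QM \<and> g n = g (Suc n) * q" unfolding pidealR_def by auto
  qed
  then obtain h where hQ: "\<And>n. h n \<in> QM" and gh: "\<And>n. g n = g (Suc n) * h n" by metis
  have gkM: "\<And>n. Poly_Mapping.keys (g n) \<subseteq> M34" using gQ by (simp add: QM_def)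
  have hkM: "\<And>n. Poly_Mapping.keys (h n) \<subseteq> M34" using hQ by (simp add: QM_def)
  define P where "P n = prod h {..<n}" for n
  have gP: "f = g n * P n" for n
  proof (induction n)
    case 0 then show ?case by (simp add: P_def g0)
  next
    case (Suc n)
    have "P (Suc n) = P n * h n" by (simp add: P_def)
    then show ?case using Suc gh[of n] by (simp add: mult_ac)
  qed
  have gn0: "g n \<noteq> 0" for n using gP[of n] f0 by auto
  have hn0: "h n \<noteq> 0" for n using gh[of n] gn0[of n] by auto
  obtain K where sepK: "\<forall>e\<in>Poly_Mapping.keys f. \<forall>e'\<in>Poly_Mapping.keys f. e \<noteq> e' \<longrightarrow> e - e' \<notin> T3 K"
    using T3_sep_finite[of "Poly_Mapping.keys f"] gkM[of 0] g0 M34_T30 by auto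
  define D where "D n = Max (Poly_Mapping.keys (g n))" for n
  define E where "E n = Max (Poly_Mapping.keys (h n))" for n
  have DE: "D n = D (Suc n) + E n" for n
    unfolding D_def E_def using deg_mult[OF gn0[of "Suc n"] hn0[of n]] gh[of n] by simp
  have Enn: "0 \<le> E n" for n
  proof -
    have "E n \<in> Poly_Mapping.keys (h n)" unfolding E_def using hn0[of n] by simp
    then show ?thesis using hkM[of n] M34_nonneg by auto
  qed
  have Dnn: "0 \<le> D n" for n
  proof -
    have "D n \<in> Poly_Mapping.keys (g n)" unfolding D_def using gn0[of n] by simp
    then show ?thesis using gkM[of n] M34_nonneg by auto
  qed
  have "D (Suc n) \<le> D n" for n using DE[of n] Enn[of n] by linarith
  then have Ddec: "decseq D" by (rule decseq_SucI)
  define \<epsilon> :: rat where "\<epsilon> = (3/4) ^ K"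
  have \<epsilon>pos: "0 < \<epsilon>" by (simp add: \<epsilon>_def)
  have "\<exists>N. \<forall>n\<ge>N. E n < \<epsilon>"
  proof (rule ccontr)
    assume "\<not> (\<exists>N. \<forall>n\<ge>N. E n < \<epsilon>)"
    then have big: "\<forall>N. \<exists>n\<ge>N. \<epsilon> \<le> E n" by (meson not_less)
    have "\<exists>n. D n \<le> D 0 - of_nat k * \<epsilon>" for k
    proof (induction k)
      case 0 then show ?case by auto
    next
      case (Suc k)
      then obtain n where n: "D n \<le> D 0 - of_nat k * \<epsilon>" by blast
      obtain m where m: "m \<ge> n" "\<epsilon> \<le> E m" using big by blast
      have "D m \<le> D n" using Ddec m(1) by (simp add: decseqD)
      then have "D (Suc m) \<le> D 0 - of_nat (Suc k) * \<epsilon>" using DE[of m] m(2) n by (simp add: algebra_simps)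
      then show ?case by blast
    qed
    moreover obtain k where "D 0 < of_nat k * \<epsilon>" using ex_less_of_nat_mult[OF \<epsilon>pos] by blast
    ultimately obtain n where "D n \<le> D 0 - of_nat k * \<epsilon>" "D 0 < of_nat k * \<epsilon>" by blast
    then show False using Dnn[of n] by linarith
  qed
  then obtain N where EN: "\<And>n. n \<ge> N \<Longrightarrow> E n < \<epsilon>" by blast
  have mono: "\<exists>b. Poly_Mapping.keys (h n) = {b}" if "n \<ge> N" for n
  proof (rule monomial_div[of f "g (Suc n) * P n" "h n" K])
    have "f = g n * P n" by (rule gP)
    also have "\<dots> = g (Suc n) * P n * h n" using gh[of n] by (simp add: mult_ac)
    finally show "f = g (Suc n) * P n * h n" .
    show "f \<noteq> 0" by (rule f0)
    show "Poly_Mapping.keys (h n) \<subseteq> T3 K"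
    proof
      fix v assume v: "v \<in> Poly_Mapping.keys (h n)"
      have "v \<le> E n" unfolding E_def using v by simp
      then have "v < (3/4) ^ K" using EN[OF that] by (simp add: \<epsilon>_def)
      then show "v \<in> T3 K" using M34_small[of v K] v hkM[of n] by auto
    qed
    show "\<forall>e\<in>Poly_Mapping.keys f. \<forall>e'\<in>Poly_Mapping.keys f. e \<noteq> e' \<longrightarrow> e - e' \<notin> T3 K" by (rule sepK)
    show "h n \<noteq> 0" by (rule hn0)
  qed
  define u where "u = rec_nat s (\<lambda>n x. SOME v. v \<in> Poly_Mapping.keys (g (Suc n)) \<and> x - v \<in> Poly_Mapping.keys (h n))"
  have u0: "u 0 = s" by (simp add: u_def)
  have uS: "u (Suc n) = (SOME v. v \<in> Poly_Mapping.keys (g (Suc n)) \<and> u n - v \<in> Poly_Mapping.keys (h n))" for n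
    by (simp add: u_def)
  have exv: "\<exists>v. v \<in> Poly_Mapping.keys (g (Suc n)) \<and> x - v \<in> Poly_Mapping.keys (h n)"
    if "x \<in> Poly_Mapping.keys (g n)" for n x
  proof -
    have "x \<in> Poly_Mapping.keys (g (Suc n) * h n)" using that gh[of n] by simp
    then obtain a b where "x = a + b" "a \<in> Poly_Mapping.keys (g (Suc n))" "b \<in> Poly_Mapping.keys (h n)"
      using keys_mult by blast
    then show ?thesis by (intro exI[of _ a]) simp
  qed
  have uk: "u n \<in> Poly_Mapping.keys (g n)" for n
  proof (induction n)
    case 0 then show ?case using u0 g0 sk by simp
  next
    case (Suc n)
    show ?case unfolding uS using someI_ex[OF exv[OF Suc]] by blast
  qed
  have ustep: "u n - u (Suc n) \<in> Poly_Mapping.keys (h n)" for n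
    unfolding uS using someI_ex[OF exv[OF uk[of n]]] by blast
  have uM: "u n \<in> M34" for n using uk[of n] gkM[of n] by auto
  have usub: "pidealM (u n) \<subseteq> pidealM (u (Suc n))" for n
  proof
    fix x assume "x \<in> pidealM (u n)"
    then obtain c where c: "c \<in> M34" "x = u n + c" unfolding pidealM_def by auto
    have w: "u n - u (Suc n) \<in> M34" using ustep[of n] hkM[of n] by auto
    have "x = u (Suc n) + ((u n - u (Suc n)) + c)" using c by simp
    moreover have "(u n - u (Suc n)) + c \<in> M34" using w c(1) by (rule M34.add)
    ultimately show "x \<in> pidealM (u (Suc n))" unfolding pidealM_def by blast
  qed
  obtain N1 where N1: "\<And>n. n \<ge> N1 \<Longrightarrow> pidealM (u n) = pidealM (u N1)"
    using acc u0 uM usub unfolding ACCP_M_def by blast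
  define N2 where "N2 = max N N1"
  have hconst: "h n = Poly_Mapping.single 0 (Poly_Mapping.lookup (h n) 0) \<and> Poly_Mapping.lookup (h n) 0 \<noteq> 0"
    if "n \<ge> N2" for n
  proof -
    have "u n = u N1" "u (Suc n) = u N1"
      using N1[of n] N1[of "Suc n"] that pidealM_eq uM unfolding N2_def by auto
    then have "0 \<in> Poly_Mapping.keys (h n)" using ustep[of n] by simp
    moreover have "N \<le> n" using that by (simp add: N2_def)
    then obtain b where "Poly_Mapping.keys (h n) = {b}" using mono by blast
    ultimately have k0: "Poly_Mapping.keys (h n) = {0}" by auto
    then show ?thesis using keys_zero_single[OF k0] by (auto simp: in_keys_iff)
  qed
  have step: "pidealR (g (Suc n)) = pidealR (g n)" if "n \<ge> N2" for n
  proof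
    show "pidealR (g n) \<subseteq> pidealR (g (Suc n))" by (rule gsub)
    define c where "c = Poly_Mapping.lookup (h n) 0"
    have hc: "h n = Poly_Mapping.single 0 c" "c \<noteq> 0" using hconst[OF that] by (auto simp: c_def)
    have inv: "g (Suc n) = g n * Poly_Mapping.single 0 (1 / c)"
    proof -
      have "g n * Poly_Mapping.single 0 (1 / c) = g (Suc n) * (Poly_Mapping.single 0 c * Poly_Mapping.single 0 (1 / c))"
        using gh[of n] hc(1) by (simp add: mult_ac)
      also have "\<dots> = g (Suc n)" using hc(2) by (simp add: mult_single)
      finally show ?thesis by simp
    qed
    show "pidealR (g (Suc n)) \<subseteq> pidealR (g n)"
    proof
      fix x assume "x \<in> pidealR (g (Suc n))"
      then obtain q where q: "q \<in> QM" "x = g (Suc n) * q" unfolding pidealR_def by auto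
      have "Poly_Mapping.keys (Poly_Mapping.single 0 (1 / c) * q) \<subseteq> Poly_Mapping.keys q"
        using keys_mult[of "Poly_Mapping.single 0 (1 / c)" q] hc(2) by (auto split: if_splits)
      then have "Poly_Mapping.single 0 (1 / c) * q \<in> QM" using q(1) unfolding QM_def by auto
      moreover have "x = g n * (Poly_Mapping.single 0 (1 / c) * q)" using q(2) inv by (simp add: mult_ac)
      ultimately show "x \<in> pidealR (g n)" unfolding pidealR_def by blast
    qed
  qed
  have "pidealR (g (N2 + k)) = pidealR (g N2)" for k
  proof (induction k)
    case 0 then show ?case by simp
  next
    case (Suc k) then show ?case using step[of "N2 + k"] by simp
  qed
  then show "\<exists>N. \<forall>n\<ge>N. pidealR (g n) = pidealR (g N)"
    by (metis le_add_diff_inverse)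
qed

end
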